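(* Assume (h), (R-q) with $q=4$, ($\pi$-F) with $p=4$ and ($\pi$-T) with $p=4$, and fix $h\in(0,h_0]$. Then the operator $T$ defined by $T(R)_t=1_{\{t<\tau_h\}}\mathbb E_t[R_{t+h}]+1_{\{t<\tau_h\}}hf_h(t,R_t)+1_{\{t=\tau_h\}}\bar\xi$, $t\in\pi_h$, maps $\mathcal V(\tau_h)$ into itself and is a contraction with respect to $\|\cdot\|_{\tau_h}$.
   Context: $(\Omega,\mathcal F,(\mathcal F_t)_{t\ge0},\mathbb P)$ is a filtered probability space whose filtration is generated by a $d$-dimensional Brownian motion, augmented by null sets; $\mathbb E_t=\mathbb E[\cdot\mid\mathcal F_t]$. $\tau$ is a stopping time and $L_f>0$ a constant. For $h>0$, $\pi_h=\{nh:n\in\mathbb N_0\}$; for each $h\in(0,h_0]$ there are given a finite $\pi_h$-valued stopping time $\tau_h$, an $\mathcal F_{\tau_h}$-measurable $\bar\xi$, and $f_h:\pi_h\times\Omega\times\mathbb R\to\mathbb R$. $\mathcal V(\tau_h)$ is the set of sequences $(R_t)_{t\in\pi_h}$ with $R_t\in L^2(\mathcal F_t)$, $1_{\{t>\tau_h\}}R_t=0$ for all $t$, and $\|R\|_{\tau_h}=\sum_{t\in\pi_h}(1-3L_fh)^{-t/h}\|1_{\{t\le\tau_h\}}R_t\|_{L^2}<\infty$; it is a Banach space. Assumptions: (h) $h_0<\min\{L_f,\frac1{12L_f}\}$ and $h\in(0,h_0]$. (R-q) for a parameter $q\ge2$: there is $\rho>4qL_f$ with $\exp(\rho\tau)\in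 L^1$ and $\sup_{h\in(0,h_0]}\exp(\rho\tau_h)\in L^1$. ($\pi$-F) for a parameter $p$: each $f_h$ is Lipschitz in its last variable with the constant $L_f$, $f_h(t,A)$ is $\mathcal F_t$-measurable for every $\mathcal F_t$-measurable $A$, and $\mathbb E[\sup_{h\in(0,h_0]}\sup_{t\in\pi_h\cap[0,\tau\vee\tau_h]}|f_h(t,0)|^p]<\infty$. ($\pi$-T) for a parameter $p$: $\bar\xi$ is $\mathcal F_{\tau_h}$-measurable and $\mathbb E[\sup_{h\in(0,h_0]}|\bar\xi|^p]<\infty$. *)

theory Defs
  imports "HOL-Probability.Probability"
begin

definition std_brownian_motion :: "'a measure \<Rightarrow> (real \<Rightarrow> 'a \<Rightarrow> real ^ 'd::finite) \<Rightarrow> bool" where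
  "std_brownian_motion M W \<longleftrightarrow>
     prob_space M \<and>
     (\<forall>t. W t \<in> borel_measurable M) \<and>
     (AE \<omega> in M. W 0 \<omega> = 0) \<and>
     (AE \<omega> in M. continuous_on {0..} (\<lambda>t. W t \<omega>)) \<and>
     (\<forall>ts :: real list. sorted_wrt (<) ts \<and> ts \<noteq> [] \<and> 0 \<le> hd ts \<longrightarrow>
        prob_space.indep_vars M (\<lambda>_. borel)
          (\<lambda>(i, j) \<omega>. (W (ts ! Suc i) \<omega> - W (ts ! i) \<omega>) $ j) ({..<length ts - 1} \<times> UNIV) \<and>
        (\<forall>i < length ts - 1. \<forall>j.
          distributed M lborel (\<lambda>\<omega>. (W (ts ! Suc i) \<omega> - W (ts ! i) \<omega>) $ j)
            (\<lambda>x. ennreal (normal_density 0 (sqrt (ts ! Suc i - ts ! i)) x))))"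

definition bm_filtration :: "'a measure \<Rightarrow> (real \<Rightarrow> 'a \<Rightarrow> real ^ 'd::finite) \<Rightarrow> real \<Rightarrow> 'a measure" where
  "bm_filtration M W t = sigma (space M)
     ({W s -` B \<inter> space M | s B. 0 \<le> s \<and> s \<le> t \<and> B \<in> sets borel} \<union> null_sets M)"

definition finite_expectation :: "'a measure \<Rightarrow> ('a \<Rightarrow> ennreal) \<Rightarrow> bool" where
  "finite_expectation M X \<longleftrightarrow> X \<in> borel_measurable M \<and> (\<integral>\<^sup>+ \<omega>. X \<omega> \<partial>M) < \<infinity>"

definition L2norm :: "'a measure \<Rightarrow> ('a \<Rightarrow> real) \<Rightarrow> real" where
  "L2norm M X = sqrt (\<integral>\<omega>. (X \<omega>)\<^sup>2 \<partial>M)"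

(* time t = n h of the grid pi_h is represented by the index n; tau_h = N * h *)
definition Vnorm :: "'a measure \<Rightarrow> ('a \<Rightarrow> nat) \<Rightarrow> real \<Rightarrow> real \<Rightarrow> (nat \<Rightarrow> 'a \<Rightarrow> real) \<Rightarrow> real" where
  "Vnorm M N h L R =
     (\<Sum>n. inverse ((1 - 3 * L * h) ^ n) * L2norm M (\<lambda>\<omega>. indicator {\<omega>. n \<le> N \<omega>} \<omega> * R n \<omega>))"

definition Vspace :: "'a measure \<Rightarrow> (nat \<Rightarrow> 'a measure) \<Rightarrow> ('a \<Rightarrow> nat) \<Rightarrow> real \<Rightarrow> real
    \<Rightarrow> (nat \<Rightarrow> 'a \<Rightarrow> real) set" where
  "Vspace M G N h L = {R.
     (\<forall>n. R n \<in> borel_measurable (G n) \<and> integrable M (\<lambda>\<omega>. (R n \<omega>)\<^sup>2)) \<and>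
     (\<forall>n. AE \<omega> in M. N \<omega> < n \<longrightarrow> R n \<omega> = 0) \<and>
     summable (\<lambda>n. inverse ((1 - 3 * L * h) ^ n) * L2norm M (\<lambda>\<omega>. indicator {\<omega>. n \<le> N \<omega>} \<omega> * R n \<omega>))}"

definition Top :: "'a measure \<Rightarrow> (nat \<Rightarrow> 'a measure) \<Rightarrow> ('a \<Rightarrow> nat) \<Rightarrow> real
    \<Rightarrow> (nat \<Rightarrow> 'a \<Rightarrow> real \<Rightarrow> real) \<Rightarrow> ('a \<Rightarrow> real) \<Rightarrow> (nat \<Rightarrow> 'a \<Rightarrow> real) \<Rightarrow> nat \<Rightarrow> 'a \<Rightarrow> real" where
  "Top M G N h f xi R n \<omega> =
     indicator {\<omega>. n < N \<omega>} \<omega> * real_cond_exp M (G n) (R (Suc n)) \<omega>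
     + indicator {\<omega>. n < N \<omega>} \<omega> * (h * f n \<omega> (R n \<omega>))
     + indicator {\<omega>. n = N \<omega>} \<omega> * xi \<omega>"

end

theory Submission
  imports Defs
begin


lemma L2_CS:
  fixes X Y :: "'a \<Rightarrow> real"
  assumes [measurable]: "X \<in> borel_measurable M" "Y \<in> borel_measurable M"
    and iX: "integrable M (\<lambda>x. (X x)\<^sup>2)" and iY: "integrable M (\<lambda>x. (Y x)\<^sup>2)"
  shows "integrable M (\<lambda>x. X x * Y x)"
    and "(\<integral>x. X x * Y x \<partial>M) \<le> sqrt (\<integral>x. (X x)\<^sup>2 \<partial>M) * sqrt (\<integral>x. (Y x)\<^sup>2 \<partial>M)"
proof -
  have b: "norm (X x * Y x) \<le> norm (((X x)\<^sup>2 + (Y x)\<^sup>2) / 2)" for x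
  proof -
    have "0 \<le> (\<bar>X x\<bar> - \<bar>Y x\<bar>)\<^sup>2" by simp
    then show ?thesis by (simp add: power2_eq_square abs_mult algebra_simps)
  qed
  show iXY: "integrable M (\<lambda>x. X x * Y x)"
    by (rule Bochner_Integration.integrable_bound[OF _ _ AE_I2[OF b]]) (use iX iY in auto)
  define A where "A = (\<integral>x. (X x)\<^sup>2 \<partial>M)"
  define B where "B = (\<integral>x. (Y x)\<^sup>2 \<partial>M)"
  have A0: "0 \<le> A" unfolding A_def by simp
  have B0: "0 \<le> B" unfolding B_def by simp
  have key: "(\<integral>x. X x * Y x \<partial>M) \<le> (t * A + B / t) / 2" if t: "t > 0" for t
  proof -
    have pw: "X x * Y x \<le> (t * (X x)\<^sup>2 + (Y x)\<^sup>2 / t) / 2" for x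
    proof -
      have "0 \<le> (t * X x - Y x)\<^sup>2 / t" using t by simp
      also have "(t * X x - Y x)\<^sup>2 / t = t * (X x)\<^sup>2 - 2 * X x * Y x + (Y x)\<^sup>2 / t"
        using t by (simp add: power2_eq_square field_simps)
      finally show ?thesis by simp
    qed
    have "(\<integral>x. X x * Y x \<partial>M) \<le> (\<integral>x. (t * (X x)\<^sup>2 + (Y x)\<^sup>2 / t) / 2 \<partial>M)"
      by (rule integral_mono[OF iXY]) (use iX iY pw in auto)
    also have "\<dots> = (t * A + B / t) / 2"
      using iX iY by (simp add: A_def B_def)
    finally show ?thesis .
  qed
  show "(\<integral>x. X x * Y x \<partial>M) \<le> sqrt (\<integral>x. (X x)\<^sup>2 \<partial>M) * sqrt (\<integral>x. (Y x)\<^sup>2 \<partial>M)"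
    unfolding A_def[symmetric] B_def[symmetric]
  proof (cases "A = 0 \<or> B = 0")
    case True
    show "(\<integral>x. X x * Y x \<partial>M) \<le> sqrt A * sqrt B"
    proof (rule ccontr)
      assume c: "\<not> ?thesis"
      define c where "c = (\<integral>x. X x * Y x \<partial>M)"
      have c0: "c > 0" using c True unfolding c_def by auto
      show False
      proof (cases "A = 0")
        case True
        have "c \<le> ((B+1)/c * A + B / ((B+1)/c)) / 2" using key[of "(B+1)/c"] c0 B0 unfolding c_def by auto
        also have "\<dots> = B * c / (2 * (B+1))" using True c0 B0 by (simp add: field_simps)
        also have "\<dots> < c" using c0 B0 by (simp add: divide_less_eq algebra_simps, smt (verit) mult_nonneg_nonneg)
        finally show False by simp
      next
        case False
        then have "B = 0" using \<open>A = 0 \<or> B = 0\<close> by simp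
        have "c \<le> (c/(A+1) * A + B / (c/(A+1))) / 2" using key[of "c/(A+1)"] c0 A0 unfolding c_def by auto
        also have "\<dots> = A * c / (2 * (A+1))" using \<open>B = 0\<close> c0 A0 by (simp add: field_simps)
        also have "\<dots> < c" using c0 A0 by (simp add: divide_less_eq algebra_simps, smt (verit) mult_nonneg_nonneg)
        finally show False by simp
      qed
    qed
  next
    case False
    then have Ap: "A > 0" and Bp: "B > 0" using A0 B0 by auto
    have "(\<integral>x. X x * Y x \<partial>M) \<le> (sqrt B / sqrt A * A + B / (sqrt B / sqrt A)) / 2"
      using key[of "sqrt B / sqrt A"] Ap Bp by auto
    also have "\<dots> = sqrt A * sqrt B"
    proof -
      have sA: "A = sqrt A * sqrt A" "B = sqrt B * sqrt B" using Ap Bp by simp_all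
      have "sqrt A > 0" "sqrt B > 0" using Ap Bp by simp_all
      then show ?thesis by (subst (1 3) sA) (simp add: field_simps)
    qed
    finally show "(\<integral>x. X x * Y x \<partial>M) \<le> sqrt A * sqrt B" .
  qed
qed


lemma L2_sq_add:
  fixes X Y :: "'a \<Rightarrow> real"
  assumes [measurable]: "X \<in> borel_measurable M" "Y \<in> borel_measurable M"
    and iX: "integrable M (\<lambda>x. (X x)\<^sup>2)" and iY: "integrable M (\<lambda>x. (Y x)\<^sup>2)"
  shows "integrable M (\<lambda>x. (X x + Y x)\<^sup>2)"
proof -
  have "integrable M (\<lambda>x. (X x)\<^sup>2 + (Y x)\<^sup>2 + 2 * X x * Y x)"
    using iX iY L2_CS(1)[OF assms] by (auto simp: mult.assoc)
  then show ?thesis by (simp add: power2_sum)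
qed

lemma L2norm_nonneg: "0 \<le> L2norm M X"
  unfolding L2norm_def by simp

lemma L2norm_triangle:
  fixes X Y :: "'a \<Rightarrow> real"
  assumes [measurable]: "X \<in> borel_measurable M" "Y \<in> borel_measurable M"
    and iX: "integrable M (\<lambda>x. (X x)\<^sup>2)" and iY: "integrable M (\<lambda>x. (Y x)\<^sup>2)"
  shows "L2norm M (\<lambda>x. X x + Y x) \<le> L2norm M X + L2norm M Y"
proof -
  define A where "A = (\<integral>x. (X x)\<^sup>2 \<partial>M)"
  define B where "B = (\<integral>x. (Y x)\<^sup>2 \<partial>M)"
  have A0: "0 \<le> A" unfolding A_def by simp
  have B0: "0 \<le> B" unfolding B_def by simp
  have "(\<integral>x. (X x + Y x)\<^sup>2 \<partial>M) = (\<integral>x. (X x)\<^sup>2 + 2 * (X x * Y x) + (Y x)\<^sup>2 \<partial>M)"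
    by (simp add: power2_sum algebra_simps)
  also have "\<dots> = A + 2 * (\<integral>x. X x * Y x \<partial>M) + B"
    using iX iY L2_CS(1)[OF assms] by (simp add: A_def B_def)
  also have "\<dots> \<le> A + 2 * (sqrt A * sqrt B) + B"
    using L2_CS(2)[OF assms] by (simp add: A_def B_def)
  also have "\<dots> = (sqrt A + sqrt B)\<^sup>2"
    using A0 B0 by (simp add: power2_sum)
  finally have "sqrt (\<integral>x. (X x + Y x)\<^sup>2 \<partial>M) \<le> sqrt ((sqrt A + sqrt B)\<^sup>2)"
    by (rule real_sqrt_le_mono)
  also have "\<dots> = sqrt A + sqrt B" using A0 B0 by simp
  finally show ?thesis unfolding L2norm_def A_def B_def .
qed

lemma L2norm_mono:
  fixes X Y :: "'a \<Rightarrow> real"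
  assumes [measurable]: "X \<in> borel_measurable M"
    and iY: "integrable M (\<lambda>x. (Y x)\<^sup>2)"
    and le: "AE x in M. \<bar>X x\<bar> \<le> \<bar>Y x\<bar>"
  shows "integrable M (\<lambda>x. (X x)\<^sup>2)" "L2norm M X \<le> L2norm M Y"
proof -
  have le2: "AE x in M. (X x)\<^sup>2 \<le> (Y x)\<^sup>2"
    using le by eventually_elim (simp add: abs_le_square_iff)
  show iX: "integrable M (\<lambda>x. (X x)\<^sup>2)"
    by (rule Bochner_Integration.integrable_bound[OF iY]) (use le2 in auto)
  have "(\<integral>x. (X x)\<^sup>2 \<partial>M) \<le> (\<integral>x. (Y x)\<^sup>2 \<partial>M)"
    by (rule integral_mono_AE[OF iX iY le2])
  then show "L2norm M X \<le> L2norm M Y" unfolding L2norm_def by simp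
qed

lemma L2norm_cmult:
  fixes X :: "'a \<Rightarrow> real"
  shows "L2norm M (\<lambda>x. c * X x) = \<bar>c\<bar> * L2norm M X"
proof -
  have "(\<integral>x. (c * X x)\<^sup>2 \<partial>M) = c\<^sup>2 * (\<integral>x. (X x)\<^sup>2 \<partial>M)"
    by (simp add: power_mult_distrib)
  then show ?thesis unfolding L2norm_def by (simp add: real_sqrt_mult)
qed

lemma (in finite_measure) sq_integrable_imp_integrable:
  fixes X :: "'a \<Rightarrow> real"
  assumes [measurable]: "X \<in> borel_measurable M" and iX: "integrable M (\<lambda>x. (X x)\<^sup>2)"
  shows "integrable M X"
proof (rule Bochner_Integration.integrable_bound[of _ "\<lambda>x. 1 + (X x)\<^sup>2"])
  show "integrable M (\<lambda>x. 1 + (X x)\<^sup>2)" using iX by simp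
  show "AE x in M. norm (X x) \<le> norm (1 + (X x)\<^sup>2)"
  proof (rule AE_I2)
    fix x
    show "norm (X x) \<le> norm (1 + (X x)\<^sup>2)"
    proof (cases "\<bar>X x\<bar> \<le> 1")
      case True then show ?thesis by (simp add: add_increasing2)
    next
      case False
      then have "1 \<le> \<bar>X x\<bar>" by simp
      then have "\<bar>X x\<bar> * 1 \<le> \<bar>X x\<bar> * \<bar>X x\<bar>" by (intro mult_left_mono) simp_all
      then have "\<bar>X x\<bar> \<le> (X x)\<^sup>2" by (simp only: abs_mult_self_eq power2_eq_square mult_1_right)
      then show ?thesis by simp
    qed
  qed
qed simp

lemma (in prob_space) cond_exp_L2:
  fixes X :: "'a \<Rightarrow> real"
  assumes sub: "subalgebra M G"
    and [measurable]: "X \<in> borel_measurable M" and iX: "integrable M (\<lambda>x. (X x)\<^sup>2)"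
  shows "integrable M (\<lambda>x. (real_cond_exp M G X x)\<^sup>2)"
    "L2norm M (real_cond_exp M G X) \<le> L2norm M X"
proof -
  interpret fms: finite_measure_subalgebra M G
    using sub by unfold_locales
  have iX1: "integrable M X" by (rule sq_integrable_imp_integrable) (use iX in auto)
  have J: "AE x in M. (real_cond_exp M G X x)\<^sup>2 \<le> real_cond_exp M G (\<lambda>x. (X x)\<^sup>2) x"
    using fms.real_cond_exp_jensens_inequality(2)[of X UNIV 0 0 power2] iX1 iX convex_power2
    by auto
  have iC: "integrable M (real_cond_exp M G (\<lambda>x. (X x)\<^sup>2))"
    by (rule fms.real_cond_exp_int(1)[OF iX])
  show i2: "integrable M (\<lambda>x. (real_cond_exp M G X x)\<^sup>2)"
    by (rule Bochner_Integration.integrable_bound[OF iC]) (use J in auto)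
  have "(\<integral>x. (real_cond_exp M G X x)\<^sup>2 \<partial>M) \<le> (\<integral>x. real_cond_exp M G (\<lambda>x. (X x)\<^sup>2) x \<partial>M)"
    by (rule integral_mono_AE[OF i2 iC J])
  also have "\<dots> = (\<integral>x. (X x)\<^sup>2 \<partial>M)"
    by (rule fms.real_cond_exp_int(2)[OF iX])
  finally show "L2norm M (real_cond_exp M G X) \<le> L2norm M X"
    unfolding L2norm_def by simp
qed


lemma L2norm_abs: "L2norm M (\<lambda>x. \<bar>X x\<bar>) = L2norm M X"
  unfolding L2norm_def by simp

lemma L2norm_zero: "L2norm M (\<lambda>x. 0) = 0"
  unfolding L2norm_def by simp

lemma L2_bound4:
  fixes X Y1 Y2 Y3 Y4 :: "'a \<Rightarrow> real"
  assumes [measurable]: "X \<in> borel_measurable M" "Y1 \<in> borel_measurable M" "Y2 \<in> borel_measurable M"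
      "Y3 \<in> borel_measurable M" "Y4 \<in> borel_measurable M"
    and i1: "integrable M (\<lambda>x. (Y1 x)\<^sup>2)" and i2: "integrable M (\<lambda>x. (Y2 x)\<^sup>2)"
    and i3: "integrable M (\<lambda>x. (Y3 x)\<^sup>2)" and i4: "integrable M (\<lambda>x. (Y4 x)\<^sup>2)"
    and c: "0 \<le> c1" "0 \<le> c2" "0 \<le> c3" "0 \<le> c4"
    and le: "AE x in M. \<bar>X x\<bar> \<le> c1 * \<bar>Y1 x\<bar> + c2 * \<bar>Y2 x\<bar> + c3 * \<bar>Y3 x\<bar> + c4 * \<bar>Y4 x\<bar>"
  shows "integrable M (\<lambda>x. (X x)\<^sup>2)"
    "L2norm M X \<le> c1 * L2norm M Y1 + c2 * L2norm M Y2 + c3 * L2norm M Y3 + c4 * L2norm M Y4"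
proof -
  have sq: "integrable M (\<lambda>x. (c * \<bar>Y x\<bar>)\<^sup>2)" if "integrable M (\<lambda>x. (Y x)\<^sup>2)" for c and Y :: "'a \<Rightarrow> real"
    using that by (simp add: power_mult_distrib)
  have nm: "L2norm M (\<lambda>x. c * \<bar>Y x\<bar>) = c * L2norm M Y" if "0 \<le> c" for c and Y :: "'a \<Rightarrow> real"
    using that L2norm_cmult[of M c "\<lambda>x. \<bar>Y x\<bar>"] L2norm_abs[of M Y] by simp
  define Z1 where "Z1 = (\<lambda>x. c1 * \<bar>Y1 x\<bar>)"
  define Z2 where "Z2 = (\<lambda>x. c2 * \<bar>Y2 x\<bar>)"
  define Z3 where "Z3 = (\<lambda>x. c3 * \<bar>Y3 x\<bar>)"
  define Z4 where "Z4 = (\<lambda>x. c4 * \<bar>Y4 x\<bar>)"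
  have [measurable]: "Z1 \<in> borel_measurable M" "Z2 \<in> borel_measurable M" "Z3 \<in> borel_measurable M"
    "Z4 \<in> borel_measurable M" unfolding Z1_def Z2_def Z3_def Z4_def by measurable
  have j1: "integrable M (\<lambda>x. (Z1 x)\<^sup>2)" unfolding Z1_def by (rule sq[OF i1])
  have j2: "integrable M (\<lambda>x. (Z2 x)\<^sup>2)" unfolding Z2_def by (rule sq[OF i2])
  have j3: "integrable M (\<lambda>x. (Z3 x)\<^sup>2)" unfolding Z3_def by (rule sq[OF i3])
  have j4: "integrable M (\<lambda>x. (Z4 x)\<^sup>2)" unfolding Z4_def by (rule sq[OF i4])
  have j12: "integrable M (\<lambda>x. (Z1 x + Z2 x)\<^sup>2)" by (rule L2_sq_add) (use j1 j2 in auto)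
  have j123: "integrable M (\<lambda>x. (Z1 x + Z2 x + Z3 x)\<^sup>2)" by (rule L2_sq_add) (use j12 j3 in auto)
  have j1234: "integrable M (\<lambda>x. (Z1 x + Z2 x + Z3 x + Z4 x)\<^sup>2)" by (rule L2_sq_add) (use j123 j4 in auto)
  have le': "AE x in M. \<bar>X x\<bar> \<le> \<bar>Z1 x + Z2 x + Z3 x + Z4 x\<bar>"
    using le by eventually_elim (auto simp: Z1_def Z2_def Z3_def Z4_def)
  show "integrable M (\<lambda>x. (X x)\<^sup>2)" by (rule L2norm_mono(1)[OF _ j1234 le']) simp
  have "L2norm M X \<le> L2norm M (\<lambda>x. Z1 x + Z2 x + Z3 x + Z4 x)" by (rule L2norm_mono(2)[OF _ j1234 le']) simp
  also have "\<dots> \<le> L2norm M (\<lambda>x. Z1 x + Z2 x + Z3 x) + L2norm M Z4"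
    by (rule L2norm_triangle[of "\<lambda>x. Z1 x + Z2 x + Z3 x" M Z4]) (use j123 j4 in auto)
  also have "L2norm M (\<lambda>x. Z1 x + Z2 x + Z3 x) \<le> L2norm M (\<lambda>x. Z1 x + Z2 x) + L2norm M Z3"
    by (rule L2norm_triangle[of "\<lambda>x. Z1 x + Z2 x" M Z3]) (use j12 j3 in auto)
  also have "L2norm M (\<lambda>x. Z1 x + Z2 x) \<le> L2norm M Z1 + L2norm M Z2"
    by (rule L2norm_triangle[of Z1 M Z2]) (use j1 j2 in auto)
  finally show "L2norm M X \<le> c1 * L2norm M Y1 + c2 * L2norm M Y2 + c3 * L2norm M Y3 + c4 * L2norm M Y4"
    using nm c unfolding Z1_def Z2_def Z3_def Z4_def by simp
qed

lemma L2_tail: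
  fixes Y Z E :: "'a \<Rightarrow> real" and N :: "'a \<Rightarrow> nat"
  assumes [measurable]: "Y \<in> borel_measurable M"
    and iZ: "integrable M Z" and iE: "integrable M E"
    and b: "0 < \<beta>"
    and YZ: "AE x in M. (Y x)^4 \<le> Z x"
    and NE: "AE x in M. exp (\<beta> * real (N x)) \<le> E x"
    and YN: "AE x in M. Y x \<noteq> 0 \<longrightarrow> n \<le> N x"
  shows "integrable M (\<lambda>x. (Y x)\<^sup>2)"
    "L2norm M Y \<le> sqrt (((\<integral>x. Z x \<partial>M) + (\<integral>x. E x \<partial>M)) / 2) / exp (\<beta> / 4) ^ n"
proof -
  define p where "p = exp (\<beta> / 2) ^ n"
  have p0: "p > 0" unfolding p_def by simp
  have pw: "AE x in M. (Y x)\<^sup>2 \<le> (Z x + E x) / (2 * p)"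
    using YZ NE YN
  proof eventually_elim
    case (elim x)
    have Z0: "0 \<le> Z x" using elim(1) by (smt (verit) zero_le_power_eq_numeral even_numeral)
    have E0: "0 < E x" using elim(2) by (smt (verit) exp_gt_zero)
    show ?case
    proof (cases "Y x = 0")
      case True then show ?thesis using Z0 E0 p0 by simp
    next
      case False
      then have nN: "n \<le> N x" using elim(3) by simp
      have "p = exp (real n * (\<beta> / 2))" unfolding p_def by (rule exp_of_nat_mult[symmetric])
      also have "\<dots> \<le> exp (real (N x) * (\<beta> / 2))" using nN b by simp
      finally have pe: "p \<le> exp (\<beta> * real (N x) / 2)" by (simp add: mult.commute)
      have ee: "(exp (\<beta> * real (N x) / 2))\<^sup>2 = exp (\<beta> * real (N x))"
        by (simp add: power2_eq_square exp_add[symmetric])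
      have "(Y x)\<^sup>2 * p \<le> (Y x)\<^sup>2 * exp (\<beta> * real (N x) / 2)"
        using pe by (simp add: mult_left_mono)
      also have "\<dots> \<le> (((Y x)\<^sup>2)\<^sup>2 + (exp (\<beta> * real (N x) / 2))\<^sup>2) / 2"
      proof -
        have "0 \<le> ((Y x)\<^sup>2 - exp (\<beta> * real (N x) / 2))\<^sup>2" by simp
        then show ?thesis by (simp add: power2_diff)
      qed
      also have "\<dots> = ((Y x)^4 + exp (\<beta> * real (N x))) / 2" using ee by simp
      also have "\<dots> \<le> (Z x + E x) / 2" using elim(1,2) by simp
      finally show ?thesis using p0 by (simp add: field_simps)
    qed
  qed
  have iZE: "integrable M (\<lambda>x. (Z x + E x) / (2 * p))" using iZ iE by simp
  show i2: "integrable M (\<lambda>x. (Y x)\<^sup>2)"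
  proof (rule Bochner_Integration.integrable_bound[OF iZE])
    show "AE x in M. norm ((Y x)\<^sup>2) \<le> norm ((Z x + E x) / (2 * p))"
      using pw by eventually_elim (metis abs_ge_self abs_power2 order_trans real_norm_def)
  qed simp
  have "(\<integral>x. (Y x)\<^sup>2 \<partial>M) \<le> (\<integral>x. (Z x + E x) / (2 * p) \<partial>M)"
    by (rule integral_mono_AE[OF i2 iZE pw])
  also have "\<dots> = ((\<integral>x. Z x \<partial>M) + (\<integral>x. E x \<partial>M)) / 2 / p"
    using iZ iE by simp
  finally have "L2norm M Y \<le> sqrt (((\<integral>x. Z x \<partial>M) + (\<integral>x. E x \<partial>M)) / 2 / p)"
    unfolding L2norm_def by simp
  also have "\<dots> = sqrt (((\<integral>x. Z x \<partial>M) + (\<integral>x. E x \<partial>M)) / 2) / sqrt p"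
    by (simp only: real_sqrt_divide)
  also have "sqrt p = exp (\<beta> / 4) ^ n"
  proof -
    have "p = (exp (\<beta> / 4) ^ n)\<^sup>2"
      unfolding p_def by (simp add: power2_eq_square power_mult_distrib[symmetric] exp_add[symmetric])
    then show ?thesis by simp
  qed
  finally show "L2norm M Y \<le> sqrt (((\<integral>x. Z x \<partial>M) + (\<integral>x. E x \<partial>M)) / 2) / exp (\<beta> / 4) ^ n" .
qed



lemma pred_indicator_measurable:
  "Measurable.pred M P \<Longrightarrow> (\<lambda>x. indicator {x. P x} x :: real) \<in> borel_measurable M"
  unfolding indicator_def by measurable

locale absctx = prob_space M
  for M :: "'a measure" and G :: "nat \<Rightarrow> 'a measure" and N :: "'a \<Rightarrow> nat"
    and f :: "nat \<Rightarrow> 'a \<Rightarrow> real \<Rightarrow> real" and xi :: "'a \<Rightarrow> real" and L h \<rho> :: real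
    and Gf Gx E :: "'a \<Rightarrow> real" +
  assumes sub: "\<And>n. subalgebra M (G n)"
    and Nm: "\<And>n. Measurable.pred (G n) (\<lambda>\<omega>. n < N \<omega>)"
    and Lp: "0 < L" and hp: "0 < h" and Lh: "L * h < 1/12" and rho: "16 * L < \<rho>"
    and lip: "\<And>n \<omega> y z. \<bar>f n \<omega> y - f n \<omega> z\<bar> \<le> L * \<bar>y - z\<bar>"
    and adapt: "\<And>n A. A \<in> borel_measurable (G n) \<Longrightarrow> (\<lambda>\<omega>. f n \<omega> (A \<omega>)) \<in> borel_measurable (G n)"
    and xim: "\<And>n. (\<lambda>\<omega>. indicator {\<omega>. n = N \<omega>} \<omega> * xi \<omega>) \<in> borel_measurable (G n)"
    and iGf: "integrable M Gf" and iGx: "integrable M Gx" and iE: "integrable M E"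
    and Gf0: "\<And>\<omega>. 0 \<le> Gf \<omega>"
    and bGf: "AE \<omega> in M. \<forall>n. n < N \<omega> \<longrightarrow> (f n \<omega> 0)^4 \<le> Gf \<omega>"
    and bGx: "AE \<omega> in M. (xi \<omega>)^4 \<le> Gx \<omega>"
    and bE: "AE \<omega> in M. exp ((\<rho> * h) * real (N \<omega>)) \<le> E \<omega>"
begin

definition "q = 1 - 3 * L * h"
definition "w n = inverse (q ^ n)"
definition "\<theta> = exp ((\<rho> * h) / 4)"
definition "Kf = sqrt (((\<integral>x. Gf x \<partial>M) + (\<integral>x. E x \<partial>M)) / 2)"
definition "Kx = sqrt (((\<integral>x. Gx x \<partial>M) + (\<integral>x. E x \<partial>M)) / 2)"

lemma q_pos: "0 < q" and q_lt1: "q < 1"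
  using Lh Lp hp by (auto simp: q_def)

lemma w_Suc: "w n = q * w (Suc n)"
  using q_pos by (simp add: w_def)

lemma w_pos: "0 < w n"
  using q_pos by (simp add: w_def)

lemma qtheta: "1 < q * \<theta>"
proof -
  have "1 + \<rho> * h / 4 \<le> \<theta>" unfolding \<theta>_def by (rule exp_ge_add_one_self)
  moreover have "1 + 4 * (L * h) < 1 + \<rho> * h / 4" using rho hp by simp
  ultimately have t: "1 + 4 * (L * h) < \<theta>" by simp
  have x0: "0 < L * h" using Lp hp by simp
  have "1 < q * (1 + 4 * (L * h))"
  proof -
    have "q * (1 + 4 * (L * h)) = 1 + (L * h) * (1 - 12 * (L * h))" unfolding q_def by (simp add: algebra_simps)
    moreover have "0 < (L * h) * (1 - 12 * (L * h))" using x0 Lh by simp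
    ultimately show ?thesis by simp
  qed
  also have "\<dots> < q * \<theta>" using t q_pos by simp
  finally show ?thesis .
qed

lemma geom_summable: "summable (\<lambda>n. w n * (C / \<theta> ^ n))"
proof -
  have r: "norm (inverse (q * \<theta>)) < 1"
  proof -
    have "0 < q * \<theta>" using qtheta by simp
    then have "norm (inverse (q * \<theta>)) = inverse (q * \<theta>)"
      by (simp only: real_norm_def abs_of_pos positive_imp_inverse_positive)
    also have "\<dots> < 1" using qtheta by (simp only: inverse_less_1_iff) simp
    finally show ?thesis .
  qed
  have "summable (\<lambda>n. C * (inverse (q * \<theta>)) ^ n)"
    using r by (intro summable_mult summable_geometric)
  moreover have "w n * (C / \<theta> ^ n) = C * (inverse (q * \<theta>)) ^ n" for n
    by (simp add: w_def field_simps power_mult_distrib power_inverse)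
  ultimately show ?thesis by simp
qed

lemma subM: "sets (G n) \<subseteq> sets M" "space (G n) = space M"
  using sub[of n] by (auto simp: subalgebra_def)

lemma GM: "X \<in> borel_measurable (G n) \<Longrightarrow> X \<in> borel_measurable M"
  by (rule measurable_from_subalg[OF sub])

lemma ind_lt_G: "(\<lambda>\<omega>. indicator {\<omega>. n < N \<omega>} \<omega> :: real) \<in> borel_measurable (G n)"
  by (rule pred_indicator_measurable[OF Nm])

lemma pred_le_M: "Measurable.pred M (\<lambda>\<omega>. n \<le> N \<omega>)"
proof (cases n)
  case 0 then show ?thesis by simp
next
  case (Suc m)
  have "Measurable.pred (G m) (\<lambda>\<omega>. m < N \<omega>)" by (rule Nm)
  then have "Measurable.pred M (\<lambda>\<omega>. m < N \<omega>)" by (rule measurable_from_subalg[OF sub])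
  then show ?thesis using Suc by (simp add: Suc_le_eq)
qed

lemma ind_le_M: "(\<lambda>\<omega>. indicator {\<omega>. n \<le> N \<omega>} \<omega> :: real) \<in> borel_measurable M"
  by (rule pred_indicator_measurable[OF pred_le_M])


abbreviation "T \<equiv> Top M G N h f xi"
abbreviation "V \<equiv> Vspace M G N h L"

lemma VD:
  assumes "R \<in> V"
  shows "R n \<in> borel_measurable (G n)" "integrable M (\<lambda>\<omega>. (R n \<omega>)\<^sup>2)"
    "AE \<omega> in M. N \<omega> < n \<longrightarrow> R n \<omega> = 0"
    "summable (\<lambda>n. w n * L2norm M (\<lambda>\<omega>. indicator {\<omega>. n \<le> N \<omega>} \<omega> * R n \<omega>))"
  using assms unfolding Vspace_def w_def q_def by auto

lemma Top_zero: "N \<omega> < n \<Longrightarrow> T R n \<omega> = 0"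
  by (simp add: Top_def)

lemma ind_Top: "indicator {\<omega>. n \<le> N \<omega>} \<omega> * T R n \<omega> = T R n \<omega>"
  by (cases "n \<le> N \<omega>") (auto simp: Top_def)

lemma Top_pw:
  "\<bar>T R n \<omega>\<bar> \<le> 1 * \<bar>real_cond_exp M (G n) (R (Suc n)) \<omega>\<bar>
     + h * \<bar>indicator {\<omega>. n < N \<omega>} \<omega> * f n \<omega> 0\<bar>
     + (h * L) * \<bar>indicator {\<omega>. n \<le> N \<omega>} \<omega> * R n \<omega>\<bar>
     + 1 * \<bar>indicator {\<omega>. n = N \<omega>} \<omega> * xi \<omega>\<bar>"
proof -
  consider "n < N \<omega>" | "n = N \<omega>" | "N \<omega> < n" by linarith
  then show ?thesis
  proof cases
    case 1
    have l: "\<bar>f n \<omega> (R n \<omega>)\<bar> \<le> \<bar>f n \<omega> 0\<bar> + L * \<bar>R n \<omega>\<bar>"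
      using lip[of n \<omega> "R n \<omega>" 0] by simp
    have "\<bar>T R n \<omega>\<bar> = \<bar>real_cond_exp M (G n) (R (Suc n)) \<omega> + h * f n \<omega> (R n \<omega>)\<bar>"
      using 1 by (simp add: Top_def)
    also have "\<dots> \<le> \<bar>real_cond_exp M (G n) (R (Suc n)) \<omega>\<bar> + h * \<bar>f n \<omega> (R n \<omega>)\<bar>"
      using hp by (simp add: abs_triangle_ineq[THEN order_trans] abs_mult)
    also have "\<dots> \<le> \<bar>real_cond_exp M (G n) (R (Suc n)) \<omega>\<bar> + h * (\<bar>f n \<omega> 0\<bar> + L * \<bar>R n \<omega>\<bar>)"
      using l hp by (simp add: mult_left_mono)
    finally show ?thesis using 1 hp Lp by (simp add: algebra_simps)
  next
    case 2
    then show ?thesis using hp Lp by (simp add: Top_def)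
  next
    case 3
    then show ?thesis using hp Lp by (simp add: Top_def)
  qed
qed

lemma Top_meas:
  assumes R: "R \<in> V"
  shows "T R n \<in> borel_measurable (G n)"
proof -
  have [measurable]: "R n \<in> borel_measurable (G n)" using VD[OF R] by simp
  have [measurable]: "(\<lambda>\<omega>. f n \<omega> (R n \<omega>)) \<in> borel_measurable (G n)" by (rule adapt) simp
  have [measurable]: "(\<lambda>\<omega>. indicator {\<omega>. n < N \<omega>} \<omega> :: real) \<in> borel_measurable (G n)" by (rule ind_lt_G)
  have [measurable]: "(\<lambda>\<omega>. indicator {\<omega>. n = N \<omega>} \<omega> * xi \<omega>) \<in> borel_measurable (G n)" by (rule xim)
  show ?thesis unfolding Top_def by measurable
qed

lemma f0_meas: "(\<lambda>\<omega>. indicator {\<omega>. n < N \<omega>} \<omega> * f n \<omega> 0) \<in> borel_measurable M"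
proof -
  have [measurable]: "(\<lambda>\<omega>. f n \<omega> 0) \<in> borel_measurable (G n)" using adapt[of "\<lambda>_. 0" n] by simp
  have [measurable]: "(\<lambda>\<omega>. indicator {\<omega>. n < N \<omega>} \<omega> :: real) \<in> borel_measurable (G n)" by (rule ind_lt_G)
  show ?thesis by (rule GM[of _ n]) measurable
qed

lemma f0_L2:
  "integrable M (\<lambda>\<omega>. (indicator {\<omega>. n < N \<omega>} \<omega> * f n \<omega> 0)\<^sup>2)"
  "L2norm M (\<lambda>\<omega>. indicator {\<omega>. n < N \<omega>} \<omega> * f n \<omega> 0) \<le> Kf / \<theta> ^ n"
proof -
  have b: "0 < \<rho> * h" using rho Lp hp by (simp add: mult_pos_pos)
  have Y4: "AE x in M. (indicator {\<omega>. n < N \<omega>} x * f n x 0)^4 \<le> Gf x"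
    using bGf by eventually_elim (auto simp: indicator_def Gf0)
  have YN: "AE x in M. indicator {\<omega>. n < N \<omega>} x * f n x 0 \<noteq> 0 \<longrightarrow> n \<le> N x"
    by (auto simp: indicator_def)
  note tl = L2_tail[OF f0_meas iGf iE b Y4 bE YN]
  show "integrable M (\<lambda>\<omega>. (indicator {\<omega>. n < N \<omega>} \<omega> * f n \<omega> 0)\<^sup>2)" by (rule tl(1))
  show "L2norm M (\<lambda>\<omega>. indicator {\<omega>. n < N \<omega>} \<omega> * f n \<omega> 0) \<le> Kf / \<theta> ^ n"
    using tl(2) unfolding Kf_def \<theta>_def .
qed

lemma xi_L2:
  "integrable M (\<lambda>\<omega>. (indicator {\<omega>. n = N \<omega>} \<omega> * xi \<omega>)\<^sup>2)"
  "L2norm M (\<lambda>\<omega>. indicator {\<omega>. n = N \<omega>} \<omega> * xi \<omega>) \<le> Kx / \<theta> ^ n"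
proof -
  have b: "0 < \<rho> * h" using rho Lp hp by (simp add: mult_pos_pos)
  have m: "(\<lambda>\<omega>. indicator {\<omega>. n = N \<omega>} \<omega> * xi \<omega>) \<in> borel_measurable M"
    by (rule GM[OF xim])
  have Y4: "AE x in M. (indicator {\<omega>. n = N \<omega>} x * xi x)^4 \<le> Gx x"
    using bGx
  proof eventually_elim
    case (elim x)
    have "0 \<le> (xi x)^4" by simp
    then have "0 \<le> Gx x" using elim by linarith
    then show ?case using elim by (auto simp: indicator_def)
  qed
  have YN: "AE x in M. indicator {\<omega>. n = N \<omega>} x * xi x \<noteq> 0 \<longrightarrow> n \<le> N x"
    by (auto simp: indicator_def)
  note tl = L2_tail[OF m iGx iE b Y4 bE YN]
  show "integrable M (\<lambda>\<omega>. (indicator {\<omega>. n = N \<omega>} \<omega> * xi \<omega>)\<^sup>2)" by (rule tl(1))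
  show "L2norm M (\<lambda>\<omega>. indicator {\<omega>. n = N \<omega>} \<omega> * xi \<omega>) \<le> Kx / \<theta> ^ n"
    using tl(2) unfolding Kx_def \<theta>_def .
qed


lemma ind_R_L2:
  assumes R: "R \<in> V"
  shows "(\<lambda>\<omega>. indicator {\<omega>. n \<le> N \<omega>} \<omega> * R n \<omega>) \<in> borel_measurable M"
    "integrable M (\<lambda>\<omega>. (indicator {\<omega>. n \<le> N \<omega>} \<omega> * R n \<omega>)\<^sup>2)"
    "L2norm M (R n) \<le> L2norm M (\<lambda>\<omega>. indicator {\<omega>. n \<le> N \<omega>} \<omega> * R n \<omega>)"
proof -
  have [measurable]: "R n \<in> borel_measurable M" by (rule GM[OF VD(1)[OF R]])
  have [measurable]: "(\<lambda>\<omega>. indicator {\<omega>. n \<le> N \<omega>} \<omega> :: real) \<in> borel_measurable M" by (rule ind_le_M)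
  show m: "(\<lambda>\<omega>. indicator {\<omega>. n \<le> N \<omega>} \<omega> * R n \<omega>) \<in> borel_measurable M" by measurable
  show "integrable M (\<lambda>\<omega>. (indicator {\<omega>. n \<le> N \<omega>} \<omega> * R n \<omega>)\<^sup>2)"
    by (rule L2norm_mono(1)[OF m VD(2)[OF R]]) (auto simp: indicator_def)
  have "AE \<omega> in M. \<bar>R n \<omega>\<bar> \<le> \<bar>indicator {\<omega>. n \<le> N \<omega>} \<omega> * R n \<omega>\<bar>"
    using VD(3)[OF R, of n] by eventually_elim (auto simp: indicator_def)
  then show "L2norm M (R n) \<le> L2norm M (\<lambda>\<omega>. indicator {\<omega>. n \<le> N \<omega>} \<omega> * R n \<omega>)"
    by (intro L2norm_mono(2)) (use \<open>integrable M (\<lambda>\<omega>. (indicator {\<omega>. n \<le> N \<omega>} \<omega> * R n \<omega>)\<^sup>2)\<close> in auto)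
qed

lemma Top_bound:
  assumes R: "R \<in> V"
  shows "integrable M (\<lambda>\<omega>. (T R n \<omega>)\<^sup>2)"
    "L2norm M (T R n) \<le> L2norm M (\<lambda>\<omega>. indicator {\<omega>. Suc n \<le> N \<omega>} \<omega> * R (Suc n) \<omega>)
        + h * L * L2norm M (\<lambda>\<omega>. indicator {\<omega>. n \<le> N \<omega>} \<omega> * R n \<omega>) + (h * Kf + Kx) / \<theta> ^ n"
proof -
  have RM [measurable]: "R m \<in> borel_measurable M" for m by (rule GM[OF VD(1)[OF R]])
  note ce = cond_exp_L2[OF sub RM VD(2)[OF R], of n "Suc n"]
  have TM: "T R n \<in> borel_measurable M" by (rule GM[OF Top_meas[OF R]])
  note bd = L2_bound4[OF TM borel_measurable_cond_exp2 f0_meas ind_R_L2(1)[OF R] GM[OF xim]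
      ce(1) f0_L2(1) ind_R_L2(2)[OF R] xi_L2(1), of 1 h "h * L" 1, OF _ _ _ _ AE_I2[OF Top_pw]]
  show "integrable M (\<lambda>\<omega>. (T R n \<omega>)\<^sup>2)" by (rule bd(1)) (use hp Lp in auto)
  have "L2norm M (T R n) \<le> 1 * L2norm M (real_cond_exp M (G n) (R (Suc n)))
       + h * L2norm M (\<lambda>\<omega>. indicator {\<omega>. n < N \<omega>} \<omega> * f n \<omega> 0)
       + (h * L) * L2norm M (\<lambda>\<omega>. indicator {\<omega>. n \<le> N \<omega>} \<omega> * R n \<omega>)
       + 1 * L2norm M (\<lambda>\<omega>. indicator {\<omega>. n = N \<omega>} \<omega> * xi \<omega>)"
    by (rule bd(2)) (use hp Lp in auto)
  also have "\<dots> \<le> L2norm M (\<lambda>\<omega>. indicator {\<omega>. Suc n \<le> N \<omega>} \<omega> * R (Suc n) \<omega>)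
       + h * (Kf / \<theta> ^ n) + (h * L) * L2norm M (\<lambda>\<omega>. indicator {\<omega>. n \<le> N \<omega>} \<omega> * R n \<omega>) + Kx / \<theta> ^ n"
    using ce(2) ind_R_L2(3)[OF R, of "Suc n"] f0_L2(2)[of n] xi_L2(2)[of n] hp Lp
    by (intro add_mono mult_left_mono) auto
  finally show "L2norm M (T R n) \<le> L2norm M (\<lambda>\<omega>. indicator {\<omega>. Suc n \<le> N \<omega>} \<omega> * R (Suc n) \<omega>)
        + h * L * L2norm M (\<lambda>\<omega>. indicator {\<omega>. n \<le> N \<omega>} \<omega> * R n \<omega>) + (h * Kf + Kx) / \<theta> ^ n"
    by (simp add: add_divide_distrib algebra_simps)
qed

lemma Top_in_V:
  assumes R: "R \<in> V"
  shows "T R \<in> V"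
proof -
  define b where "b n = L2norm M (\<lambda>\<omega>. indicator {\<omega>. n \<le> N \<omega>} \<omega> * R n \<omega>)" for n
  define C where "C = h * Kf + Kx"
  have bs: "summable (\<lambda>n. w n * b n)" using VD(4)[OF R] unfolding b_def .
  define g where "g n = q * (w (Suc n) * b (Suc n)) + h * L * (w n * b n) + w n * (C / \<theta> ^ n)" for n
  have gs: "summable g"
    unfolding g_def
    by (intro summable_add summable_mult geom_summable bs) (use summable_Suc_iff[of "\<lambda>n. w n * b n"] bs in simp)
  have le: "norm (w n * L2norm M (\<lambda>\<omega>. indicator {\<omega>. n \<le> N \<omega>} \<omega> * T R n \<omega>)) \<le> g n" for n
  proof -
    have "norm (w n * L2norm M (\<lambda>\<omega>. indicator {\<omega>. n \<le> N \<omega>} \<omega> * T R n \<omega>)) = w n * L2norm M (T R n)"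
      using w_pos[of n] L2norm_nonneg[of M "T R n"] by (simp add: ind_Top)
    also have "\<dots> \<le> w n * (b (Suc n) + h * L * b n + C / \<theta> ^ n)"
      using Top_bound(2)[OF R, of n] w_pos[of n] unfolding b_def C_def by (simp add: mult_left_mono)
    also have "\<dots> = g n" unfolding g_def using w_Suc[of n] by (simp add: algebra_simps)
    finally show ?thesis .
  qed
  have "summable (\<lambda>n. w n * L2norm M (\<lambda>\<omega>. indicator {\<omega>. n \<le> N \<omega>} \<omega> * T R n \<omega>))"
    by (rule summable_comparison_test'[OF gs le])
  then show ?thesis
    unfolding Vspace_def w_def[symmetric] q_def[symmetric]
    using Top_meas[OF R] Top_bound(1)[OF R] Top_zero by (auto simp: w_def q_def)
qed


lemma Top_diff_pw:
  "\<bar>indicator {\<omega>. n \<le> N \<omega>} \<omega> * (T R n \<omega> - T S n \<omega>)\<bar>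
     \<le> \<bar>real_cond_exp M (G n) (R (Suc n)) \<omega> - real_cond_exp M (G n) (S (Suc n)) \<omega>\<bar>
       + h * L * \<bar>indicator {\<omega>. n \<le> N \<omega>} \<omega> * (R n \<omega> - S n \<omega>)\<bar>"
proof -
  consider "n < N \<omega>" | "n = N \<omega>" | "N \<omega> < n" by linarith
  then show ?thesis
  proof cases
    case 1
    have l: "\<bar>f n \<omega> (R n \<omega>) - f n \<omega> (S n \<omega>)\<bar> \<le> L * \<bar>R n \<omega> - S n \<omega>\<bar>" by (rule lip)
    have "\<bar>indicator {\<omega>. n \<le> N \<omega>} \<omega> * (T R n \<omega> - T S n \<omega>)\<bar>
       = \<bar>(real_cond_exp M (G n) (R (Suc n)) \<omega> - real_cond_exp M (G n) (S (Suc n)) \<omega>)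
          + h * (f n \<omega> (R n \<omega>) - f n \<omega> (S n \<omega>))\<bar>"
      using 1 by (simp add: Top_def algebra_simps)
    also have "\<dots> \<le> \<bar>real_cond_exp M (G n) (R (Suc n)) \<omega> - real_cond_exp M (G n) (S (Suc n)) \<omega>\<bar>
          + h * \<bar>f n \<omega> (R n \<omega>) - f n \<omega> (S n \<omega>)\<bar>"
      using hp by (simp add: abs_triangle_ineq[THEN order_trans] abs_mult)
    also have "\<dots> \<le> \<bar>real_cond_exp M (G n) (R (Suc n)) \<omega> - real_cond_exp M (G n) (S (Suc n)) \<omega>\<bar>
          + h * (L * \<bar>R n \<omega> - S n \<omega>\<bar>)"
      using l hp by (simp add: mult_left_mono)
    finally show ?thesis using 1 by (simp add: algebra_simps)
  next
    case 2
    then show ?thesis using hp Lp by (simp add: Top_def)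
  next
    case 3
    then show ?thesis using hp Lp by (simp add: Top_def)
  qed
qed

lemma diff_L2:
  assumes R: "R \<in> V" and S: "S \<in> V"
  shows "(\<lambda>\<omega>. indicator {\<omega>. n \<le> N \<omega>} \<omega> * (R n \<omega> - S n \<omega>)) \<in> borel_measurable M"
    "integrable M (\<lambda>\<omega>. (indicator {\<omega>. n \<le> N \<omega>} \<omega> * (R n \<omega> - S n \<omega>))\<^sup>2)"
    "L2norm M (\<lambda>\<omega>. indicator {\<omega>. n \<le> N \<omega>} \<omega> * (R n \<omega> - S n \<omega>))
       \<le> L2norm M (\<lambda>\<omega>. indicator {\<omega>. n \<le> N \<omega>} \<omega> * R n \<omega>) + L2norm M (\<lambda>\<omega>. indicator {\<omega>. n \<le> N \<omega>} \<omega> * S n \<omega>)"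
    "(\<lambda>\<omega>. R n \<omega> - S n \<omega>) \<in> borel_measurable M"
    "integrable M (\<lambda>\<omega>. (R n \<omega> - S n \<omega>)\<^sup>2)"
    "L2norm M (\<lambda>\<omega>. R n \<omega> - S n \<omega>) \<le> L2norm M (\<lambda>\<omega>. indicator {\<omega>. n \<le> N \<omega>} \<omega> * (R n \<omega> - S n \<omega>))"
proof -
  have [measurable]: "R n \<in> borel_measurable M" "S n \<in> borel_measurable M"
    by (rule GM[OF VD(1)[OF R]], rule GM[OF VD(1)[OF S]])
  have [measurable]: "(\<lambda>\<omega>. indicator {\<omega>. n \<le> N \<omega>} \<omega> :: real) \<in> borel_measurable M" by (rule ind_le_M)
  show m: "(\<lambda>\<omega>. indicator {\<omega>. n \<le> N \<omega>} \<omega> * (R n \<omega> - S n \<omega>)) \<in> borel_measurable M" by measurable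
  show m2: "(\<lambda>\<omega>. R n \<omega> - S n \<omega>) \<in> borel_measurable M" by measurable
  have z: "integrable M (\<lambda>x. ((\<lambda>_. 0::real) x)\<^sup>2)" by simp
  note bd = L2_bound4[OF m ind_R_L2(1)[OF R] ind_R_L2(1)[OF S] borel_measurable_const borel_measurable_const
      ind_R_L2(2)[OF R] ind_R_L2(2)[OF S] z z, of 1 1 0 0]
  have pw: "AE x in M. \<bar>indicator {\<omega>. n \<le> N \<omega>} x * (R n x - S n x)\<bar>
     \<le> 1 * \<bar>indicator {\<omega>. n \<le> N \<omega>} x * R n x\<bar> + 1 * \<bar>indicator {\<omega>. n \<le> N \<omega>} x * S n x\<bar> + 0 * \<bar>0\<bar> + 0 * \<bar>0\<bar>"
    by (auto simp: indicator_def)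
  show i: "integrable M (\<lambda>\<omega>. (indicator {\<omega>. n \<le> N \<omega>} \<omega> * (R n \<omega> - S n \<omega>))\<^sup>2)"
    by (rule bd(1)) (use pw in auto)
  show "L2norm M (\<lambda>\<omega>. indicator {\<omega>. n \<le> N \<omega>} \<omega> * (R n \<omega> - S n \<omega>))
       \<le> L2norm M (\<lambda>\<omega>. indicator {\<omega>. n \<le> N \<omega>} \<omega> * R n \<omega>) + L2norm M (\<lambda>\<omega>. indicator {\<omega>. n \<le> N \<omega>} \<omega> * S n \<omega>)"
    using bd(2)[OF _ _ _ _ pw] by (simp add: L2norm_zero)
  have ae: "AE \<omega> in M. \<bar>R n \<omega> - S n \<omega>\<bar> \<le> \<bar>indicator {\<omega>. n \<le> N \<omega>} \<omega> * (R n \<omega> - S n \<omega>)\<bar>"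
    using VD(3)[OF R, of n] VD(3)[OF S, of n] by eventually_elim (auto simp: indicator_def)
  show "integrable M (\<lambda>\<omega>. (R n \<omega> - S n \<omega>)\<^sup>2)" by (rule L2norm_mono(1)[OF m2 i ae])
  show "L2norm M (\<lambda>\<omega>. R n \<omega> - S n \<omega>) \<le> L2norm M (\<lambda>\<omega>. indicator {\<omega>. n \<le> N \<omega>} \<omega> * (R n \<omega> - S n \<omega>))"
    by (rule L2norm_mono(2)[OF m2 i ae])
qed

lemma Top_diff_bound:
  assumes R: "R \<in> V" and S: "S \<in> V"
  shows "L2norm M (\<lambda>\<omega>. indicator {\<omega>. n \<le> N \<omega>} \<omega> * (T R n \<omega> - T S n \<omega>))
     \<le> L2norm M (\<lambda>\<omega>. indicator {\<omega>. Suc n \<le> N \<omega>} \<omega> * (R (Suc n) \<omega> - S (Suc n) \<omega>))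
       + h * L * L2norm M (\<lambda>\<omega>. indicator {\<omega>. n \<le> N \<omega>} \<omega> * (R n \<omega> - S n \<omega>))"
proof -
  interpret fms: finite_measure_subalgebra M "G n" using sub[of n] by unfold_locales
  have [measurable]: "R m \<in> borel_measurable M" "S m \<in> borel_measurable M" for m
    by (rule GM[OF VD(1)[OF R]], rule GM[OF VD(1)[OF S]])
  have [measurable]: "(\<lambda>\<omega>. indicator {\<omega>. n \<le> N \<omega>} \<omega> :: real) \<in> borel_measurable M" by (rule ind_le_M)
  have [measurable]: "T R n \<in> borel_measurable M" "T S n \<in> borel_measurable M"
    by (rule GM[OF Top_meas[OF R]], rule GM[OF Top_meas[OF S]])
  have Xm: "(\<lambda>\<omega>. indicator {\<omega>. n \<le> N \<omega>} \<omega> * (T R n \<omega> - T S n \<omega>)) \<in> borel_measurable M" by measurable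
  have iR: "integrable M (R (Suc n))" by (rule sq_integrable_imp_integrable) (use VD(2)[OF R] in auto)
  have iS: "integrable M (S (Suc n))" by (rule sq_integrable_imp_integrable) (use VD(2)[OF S] in auto)
  have cd: "AE \<omega> in M. real_cond_exp M (G n) (\<lambda>\<omega>. R (Suc n) \<omega> - S (Suc n) \<omega>) \<omega>
      = real_cond_exp M (G n) (R (Suc n)) \<omega> - real_cond_exp M (G n) (S (Suc n)) \<omega>"
    by (rule fms.real_cond_exp_diff[OF iR iS])
  note ce = cond_exp_L2[OF sub diff_L2(4)[OF R S] diff_L2(5)[OF R S], of n "Suc n"]
  have z: "integrable M (\<lambda>x. ((\<lambda>_. 0::real) x)\<^sup>2)" by simp
  have pw: "AE x in M. \<bar>indicator {\<omega>. n \<le> N \<omega>} x * (T R n x - T S n x)\<bar>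
     \<le> 1 * \<bar>real_cond_exp M (G n) (\<lambda>\<omega>. R (Suc n) \<omega> - S (Suc n) \<omega>) x\<bar>
       + (h * L) * \<bar>indicator {\<omega>. n \<le> N \<omega>} x * (R n x - S n x)\<bar> + 0 * \<bar>0\<bar> + 0 * \<bar>0\<bar>"
    using cd by eventually_elim (use Top_diff_pw in simp)
  note bd = L2_bound4[OF Xm borel_measurable_cond_exp2 diff_L2(1)[OF R S] borel_measurable_const borel_measurable_const
      ce(1) diff_L2(2)[OF R S] z z, of 1 "h * L" 0 0, OF _ _ _ _ pw]
  have "L2norm M (\<lambda>\<omega>. indicator {\<omega>. n \<le> N \<omega>} \<omega> * (T R n \<omega> - T S n \<omega>))
      \<le> 1 * L2norm M (real_cond_exp M (G n) (\<lambda>\<omega>. R (Suc n) \<omega> - S (Suc n) \<omega>))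
       + (h * L) * L2norm M (\<lambda>\<omega>. indicator {\<omega>. n \<le> N \<omega>} \<omega> * (R n \<omega> - S n \<omega>)) + 0 * L2norm M (\<lambda>_. 0) + 0 * L2norm M (\<lambda>_. 0)"
    by (rule bd(2)) (use hp Lp in auto)
  also have "\<dots> \<le> L2norm M (\<lambda>\<omega>. indicator {\<omega>. Suc n \<le> N \<omega>} \<omega> * (R (Suc n) \<omega> - S (Suc n) \<omega>))
       + h * L * L2norm M (\<lambda>\<omega>. indicator {\<omega>. n \<le> N \<omega>} \<omega> * (R n \<omega> - S n \<omega>))"
    using ce(2) diff_L2(6)[OF R S, of "Suc n"] by simp
  finally show ?thesis .
qed

lemma Top_contr:
  assumes R: "R \<in> V" and S: "S \<in> V"
  shows "Vnorm M N h L (\<lambda>n \<omega>. T R n \<omega> - T S n \<omega>) \<le> (1 - 2 * L * h) * Vnorm M N h L (\<lambda>n \<omega>. R n \<omega> - S n \<omega>)"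
proof -
  define d where "d n = L2norm M (\<lambda>\<omega>. indicator {\<omega>. n \<le> N \<omega>} \<omega> * (R n \<omega> - S n \<omega>))" for n
  define a where "a n = L2norm M (\<lambda>\<omega>. indicator {\<omega>. n \<le> N \<omega>} \<omega> * (T R n \<omega> - T S n \<omega>))" for n
  have ds: "summable (\<lambda>n. w n * d n)"
  proof (rule summable_comparison_test'[OF summable_add[OF VD(4)[OF R] VD(4)[OF S]]])
    fix n :: nat
    show "norm (w n * d n) \<le> w n * L2norm M (\<lambda>\<omega>. indicator {\<omega>. n \<le> N \<omega>} \<omega> * R n \<omega>)
        + w n * L2norm M (\<lambda>\<omega>. indicator {\<omega>. n \<le> N \<omega>} \<omega> * S n \<omega>)"
      using diff_L2(3)[OF R S, of n] w_pos[of n] L2norm_nonneg[of M]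
      unfolding d_def by (simp add: distrib_left[symmetric] mult_left_mono)
  qed
  define g where "g n = q * (w (Suc n) * d (Suc n)) + h * L * (w n * d n)" for n
  have ds1: "summable (\<lambda>n. w (Suc n) * d (Suc n))" using summable_Suc_iff[of "\<lambda>n. w n * d n"] ds by simp
  have gs: "summable g" unfolding g_def by (intro summable_add summable_mult ds ds1)
  have le: "w n * a n \<le> g n" for n
  proof -
    have "w n * a n \<le> w n * (d (Suc n) + h * L * d n)"
      using Top_diff_bound[OF R S, of n] w_pos[of n] unfolding a_def d_def by (simp add: mult_left_mono)
    also have "\<dots> = g n" unfolding g_def using w_Suc[of n] by (simp add: algebra_simps)
    finally show ?thesis .
  qed
  have as: "summable (\<lambda>n. w n * a n)"
  proof (rule summable_comparison_test'[OF gs])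
    fix n :: nat
    have "0 \<le> w n * a n" using w_pos[of n] L2norm_nonneg[of M] unfolding a_def by simp
    then show "norm (w n * a n) \<le> g n" using le[of n] by simp
  qed
  have "Vnorm M N h L (\<lambda>n \<omega>. T R n \<omega> - T S n \<omega>) = (\<Sum>n. w n * a n)"
    unfolding Vnorm_def w_def q_def a_def by simp
  also have "\<dots> \<le> suminf g" by (rule suminf_le[OF le as gs])
  also have "suminf g = q * (\<Sum>n. w (Suc n) * d (Suc n)) + h * L * (\<Sum>n. w n * d n)"
    unfolding g_def
    by (subst suminf_add[symmetric]) (auto intro!: summable_mult ds ds1 simp: suminf_mult[OF ds] suminf_mult[OF ds1])
  also have "(\<Sum>n. w (Suc n) * d (Suc n)) = (\<Sum>n. w n * d n) - w 0 * d 0"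
    by (rule suminf_split_head[OF ds])
  also have "q * ((\<Sum>n. w n * d n) - w 0 * d 0) + h * L * (\<Sum>n. w n * d n) \<le> (q + h * L) * (\<Sum>n. w n * d n)"
    using q_pos w_pos[of 0] L2norm_nonneg[of M] by (simp add: d_def algebra_simps)
  also have "(\<Sum>n. w n * d n) = Vnorm M N h L (\<lambda>n \<omega>. R n \<omega> - S n \<omega>)"
    unfolding Vnorm_def w_def q_def d_def by simp
  also have "q + h * L = 1 - 2 * L * h" unfolding q_def by simp
  finally show ?thesis by simp
qed

end


lemma (in absctx) main_abs:
  "(\<forall>R \<in> V. T R \<in> V) \<and> (\<exists>c. 0 \<le> c \<and> c < 1 \<and> (\<forall>R \<in> V. \<forall>S \<in> V.
      Vnorm M N h L (\<lambda>n \<omega>. T R n \<omega> - T S n \<omega>) \<le> c * Vnorm M N h L (\<lambda>n \<omega>. R n \<omega> - S n \<omega>)))"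
proof (intro conjI ballI exI[of _ "1 - 2 * L * h"])
  show "R \<in> V \<Longrightarrow> T R \<in> V" for R by (rule Top_in_V)
  show "0 \<le> 1 - 2 * L * h" using Lh by simp
  show "1 - 2 * L * h < 1" using Lp hp by simp
  show "R \<in> V \<Longrightarrow> S \<in> V \<Longrightarrow> Vnorm M N h L (\<lambda>n \<omega>. T R n \<omega> - T S n \<omega>) \<le> (1 - 2 * L * h) * Vnorm M N h L (\<lambda>n \<omega>. R n \<omega> - S n \<omega>)"
    for R S by (rule Top_contr)
qed

lemma fe_int:
  assumes "finite_expectation M X"
  shows "integrable M (\<lambda>\<omega>. enn2real (X \<omega>))" "AE \<omega> in M. X \<omega> < \<infinity>"
proof -
  have [measurable]: "X \<in> borel_measurable M" and fin: "(\<integral>\<^sup>+ \<omega>. X \<omega> \<partial>M) < \<infinity>"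
    using assms unfolding finite_expectation_def by auto
  show ae: "AE \<omega> in M. X \<omega> < \<infinity>"
    using nn_integral_PInf_AE[of X M] fin by (simp add: top.not_eq_extremum)
  have "(\<integral>\<^sup>+ \<omega>. ennreal (enn2real (X \<omega>)) \<partial>M) = (\<integral>\<^sup>+ \<omega>. X \<omega> \<partial>M)"
    by (rule nn_integral_cong_AE) (use ae in auto)
  also have "\<dots> = ennreal (enn2real (\<integral>\<^sup>+ \<omega>. X \<omega> \<partial>M))" using fin by simp
  finally show "integrable M (\<lambda>\<omega>. enn2real (X \<omega>))"
    by (intro integrableI_nn_integral_finite) auto
qed

lemma bm_gen_sub:
  assumes bm: "std_brownian_motion M W"
  shows "{W s -` B \<inter> space M | s B. 0 \<le> s \<and> s \<le> t \<and> B \<in> sets borel} \<union> null_sets M \<subseteq> sets M"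
proof -
  have "W s \<in> borel_measurable M" for s using bm unfolding std_brownian_motion_def by auto
  then show ?thesis by (auto intro: measurable_sets)
qed

lemma bm_sub:
  assumes bm: "std_brownian_motion M W"
  shows "subalgebra M (bm_filtration M W t)"
proof -
  note g = bm_gen_sub[OF bm, of t]
  have P: "{W s -` B \<inter> space M | s B. 0 \<le> s \<and> s \<le> t \<and> B \<in> sets borel} \<union> null_sets M \<subseteq> Pow (space M)"
    using g sets.sets_into_space by blast
  show ?thesis unfolding subalgebra_def bm_filtration_def
    using P g by (simp add: space_measure_of_conv sets_measure_of_conv sets.sigma_sets_subset)
qed

lemma bm_mono:
  assumes bm: "std_brownian_motion M W" and st: "s \<le> t"
  shows "sets (bm_filtration M W s) \<subseteq> sets (bm_filtration M W t)"
proof -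
  have P: "{W u -` B \<inter> space M | u B. 0 \<le> u \<and> u \<le> r \<and> B \<in> sets borel} \<union> null_sets M \<subseteq> Pow (space M)" for r
    using bm_gen_sub[OF bm, of r] sets.sets_into_space by blast
  have "{W u -` B \<inter> space M | u B. 0 \<le> u \<and> u \<le> s \<and> B \<in> sets borel} \<union> null_sets M
      \<subseteq> {W u -` B \<inter> space M | u B. 0 \<le> u \<and> u \<le> t \<and> B \<in> sets borel} \<union> null_sets M"
    using st by fastforce
  then show ?thesis unfolding bm_filtration_def
    using P by (simp add: sets_measure_of_conv sigma_sets_mono')
qed

theorem mainTheorem13:
  fixes M :: "'a measure" and W :: "real \<Rightarrow> 'a \<Rightarrow> real ^ 'd::finite"
    and F :: "real \<Rightarrow> 'a measure"
    and \<tau> :: "'a \<Rightarrow> real" and Nh :: "real \<Rightarrow> 'a \<Rightarrow> nat"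
    and xi :: "real \<Rightarrow> 'a \<Rightarrow> real" and f :: "real \<Rightarrow> nat \<Rightarrow> 'a \<Rightarrow> real \<Rightarrow> real"
    and Lf h0 h :: real
  assumes bm: "std_brownian_motion M W"
    and F_def: "F = bm_filtration M W"
    and tau_nonneg: "\<And>\<omega>. \<omega> \<in> space M \<Longrightarrow> 0 \<le> \<tau> \<omega>"
    and tau_stop: "stopping_time F \<tau>"
    and taus_stop: "\<And>k. k \<in> {0<..h0} \<Longrightarrow> stopping_time (\<lambda>n. F (real n * k)) (Nh k)"
    and Lf_pos: "0 < Lf"
    and H_h0: "h0 < min Lf (1 / (12 * Lf))"
    and H_h: "h \<in> {0<..h0}"
    and R4: "\<exists>\<rho>>4 * 4 * Lf. integrable M (\<lambda>\<omega>. exp (\<rho> * \<tau> \<omega>)) \<and>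
               finite_expectation M (\<lambda>\<omega>. SUP k\<in>{0<..h0}. ennreal (exp (\<rho> * (real (Nh k \<omega>) * k))))"
    and F_lip: "\<And>k n \<omega> y z. k \<in> {0<..h0} \<Longrightarrow> \<bar>f k n \<omega> y - f k n \<omega> z\<bar> \<le> Lf * \<bar>y - z\<bar>"
    and F_adapt: "\<And>k n A. k \<in> {0<..h0} \<Longrightarrow> A \<in> borel_measurable (F (real n * k)) \<Longrightarrow>
                    (\<lambda>\<omega>. f k n \<omega> (A \<omega>)) \<in> borel_measurable (F (real n * k))"
    and F4: "finite_expectation M (\<lambda>\<omega>. SUP k\<in>{0<..h0}.
               SUP n\<in>{n. real n * k \<le> max (\<tau> \<omega>) (real (Nh k \<omega>) * k)}. ennreal (\<bar>f k n \<omega> 0\<bar> ^ 4))"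
    and T_meas: "\<And>k. k \<in> {0<..h0} \<Longrightarrow>
                   xi k \<in> borel_measurable (filtration.pre_sigma (space M) (\<lambda>n. F (real n * k)) (Nh k))"
    and T4: "finite_expectation M (\<lambda>\<omega>. SUP k\<in>{0<..h0}. ennreal (\<bar>xi k \<omega>\<bar> ^ 4))"
  shows "(\<forall>R \<in> Vspace M (\<lambda>n. F (real n * h)) (Nh h) h Lf.
            Top M (\<lambda>n. F (real n * h)) (Nh h) h (f h) (xi h) R \<in> Vspace M (\<lambda>n. F (real n * h)) (Nh h) h Lf) \<and>
         (\<exists>c. 0 \<le> c \<and> c < 1 \<and>
            (\<forall>R \<in> Vspace M (\<lambda>n. F (real n * h)) (Nh h) h Lf. \<forall>S \<in> Vspace M (\<lambda>n. F (real n * h)) (Nh h) h Lf.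
               Vnorm M (Nh h) h Lf (\<lambda>n \<omega>. Top M (\<lambda>n. F (real n * h)) (Nh h) h (f h) (xi h) R n \<omega>
                                       - Top M (\<lambda>n. F (real n * h)) (Nh h) h (f h) (xi h) S n \<omega>)
               \<le> c * Vnorm M (Nh h) h Lf (\<lambda>n \<omega>. R n \<omega> - S n \<omega>)))"
proof -
  have P: "prob_space M" using bm unfolding std_brownian_motion_def by simp
  have hh: "h \<in> {0<..h0}" by (rule H_h)
  have hp: "0 < h" using H_h by simp
  have Lh: "Lf * h < 1/12"
  proof -
    have "h < 1 / (12 * Lf)" using H_h H_h0 by simp
    then have "h * (12 * Lf) < 1" using Lf_pos by (simp add: pos_less_divide_eq)
    then show ?thesis by (simp add: algebra_simps)
  qed
  obtain \<rho> where rho: "\<rho> > 4 * 4 * Lf" and iexp: "integrable M (\<lambda>\<omega>. exp (\<rho> * \<tau> \<omega>))"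
    and fE: "finite_expectation M (\<lambda>\<omega>. SUP k\<in>{0<..h0}. ennreal (exp (\<rho> * (real (Nh k \<omega>) * k))))"
    using R4 by blast
  define G where "G = (\<lambda>n::nat. F (real n * h))"
  have sub: "subalgebra M (G n)" for n unfolding G_def F_def by (rule bm_sub[OF bm])
  have stop: "stopping_time G (Nh h)" unfolding G_def by (rule taus_stop[OF hh])
  interpret filt: filtration "space M" G
  proof
    show "space (G i) = space M" for i using sub[of i] by (simp add: subalgebra_def)
    show "sets (G i) \<subseteq> sets (G j)" if "i \<le> j" for i j
      unfolding G_def F_def using that hp by (intro bm_mono[OF bm]) (simp add: mult_right_mono)
  qed
  have xim: "(\<lambda>\<omega>. indicator {\<omega>. n = Nh h \<omega>} \<omega> * xi h \<omega>) \<in> borel_measurable (G n)" for n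
  proof -
    have xm: "xi h \<in> borel_measurable (filt.pre_sigma (Nh h))"
      using T_meas[OF hh] unfolding G_def .
    have spG: "space (G n) = space M" using sub[of n] by (simp add: subalgebra_def)
    have [measurable]: "Measurable.pred (G n) (\<lambda>\<omega>. Nh h \<omega> = n)" by (rule filt.stopping_time_eq_const[OF stop])
    show ?thesis unfolding borel_measurable_iff_le
    proof
      fix a :: real
      have A: "{\<omega> \<in> space M. xi h \<omega> \<le> a} \<in> sets (filt.pre_sigma (Nh h))"
        using xm unfolding borel_measurable_iff_le filt.space_pre_sigma by blast
      have s1: "{\<omega> \<in> {\<omega> \<in> space M. xi h \<omega> \<le> a}. Nh h \<omega> \<le> n} \<in> sets (G n)"
        by (rule filt.sets_pre_sigmaD[OF stop A])
      have s2: "{\<omega> \<in> space (G n). Nh h \<omega> = n} \<in> sets (G n)" by measurable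
      have s3: "{\<omega> \<in> space (G n). Nh h \<omega> \<noteq> n \<and> 0 \<le> a} \<in> sets (G n)" by measurable
      have "{\<omega> \<in> space (G n). indicator {\<omega>. n = Nh h \<omega>} \<omega> * xi h \<omega> \<le> a}
          = ({\<omega> \<in> {\<omega> \<in> space M. xi h \<omega> \<le> a}. Nh h \<omega> \<le> n} \<inter> {\<omega> \<in> space (G n). Nh h \<omega> = n})
            \<union> {\<omega> \<in> space (G n). Nh h \<omega> \<noteq> n \<and> 0 \<le> a}"
        using spG by (auto simp: indicator_def)
      then show "{\<omega> \<in> space (G n). indicator {\<omega>. n = Nh h \<omega>} \<omega> * xi h \<omega> \<le> a} \<in> sets (G n)"
        using s1 s2 s3 by auto
    qed
  qed
  define Gf where "Gf = (\<lambda>\<omega>. enn2real (SUP k\<in>{0<..h0}.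
               SUP n\<in>{n. real n * k \<le> max (\<tau> \<omega>) (real (Nh k \<omega>) * k)}. ennreal (\<bar>f k n \<omega> 0\<bar> ^ 4)))"
  define Gx where "Gx = (\<lambda>\<omega>. enn2real (SUP k\<in>{0<..h0}. ennreal (\<bar>xi k \<omega>\<bar> ^ 4)))"
  define E where "E = (\<lambda>\<omega>. enn2real (SUP k\<in>{0<..h0}. ennreal (exp (\<rho> * (real (Nh k \<omega>) * k)))))"
  note f1 = fe_int[OF F4] and x1 = fe_int[OF T4] and e1 = fe_int[OF fE]
  have bGf: "AE \<omega> in M. \<forall>n. n < Nh h \<omega> \<longrightarrow> (f h n \<omega> 0)^4 \<le> Gf \<omega>"
    using f1(2)
  proof eventually_elim
    case (elim \<omega>)
    show ?case
    proof (intro allI impI)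
      fix n assume nN: "n < Nh h \<omega>"
      have "real n * h \<le> real (Nh h \<omega>) * h" using nN hp by simp
      then have nin: "n \<in> {n. real n * h \<le> max (\<tau> \<omega>) (real (Nh h \<omega>) * h)}" by simp
      have "ennreal (\<bar>f h n \<omega> 0\<bar> ^ 4) \<le> (SUP n\<in>{n. real n * h \<le> max (\<tau> \<omega>) (real (Nh h \<omega>) * h)}. ennreal (\<bar>f h n \<omega> 0\<bar> ^ 4))"
        by (rule SUP_upper[OF nin])
      also have "\<dots> \<le> (SUP k\<in>{0<..h0}.
               SUP n\<in>{n. real n * k \<le> max (\<tau> \<omega>) (real (Nh k \<omega>) * k)}. ennreal (\<bar>f k n \<omega> 0\<bar> ^ 4))"
        by (rule SUP_upper[OF hh])
      finally have "enn2real (ennreal (\<bar>f h n \<omega> 0\<bar> ^ 4)) \<le> Gf \<omega>"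
        unfolding Gf_def using elim by (intro enn2real_mono) auto
      then show "(f h n \<omega> 0)^4 \<le> Gf \<omega>" by (simp add: power_abs[symmetric] abs_of_nonneg)
    qed
  qed
  have bGx: "AE \<omega> in M. (xi h \<omega>)^4 \<le> Gx \<omega>"
    using x1(2)
  proof eventually_elim
    case (elim \<omega>)
    have "ennreal (\<bar>xi h \<omega>\<bar> ^ 4) \<le> (SUP k\<in>{0<..h0}. ennreal (\<bar>xi k \<omega>\<bar> ^ 4))"
      by (rule SUP_upper[OF hh])
    then have "enn2real (ennreal (\<bar>xi h \<omega>\<bar> ^ 4)) \<le> Gx \<omega>"
      unfolding Gx_def using elim by (intro enn2real_mono) auto
    then show ?case by (simp add: power_abs[symmetric] abs_of_nonneg)
  qed
  have bE: "AE \<omega> in M. exp ((\<rho> * h) * real (Nh h \<omega>)) \<le> E \<omega>"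
    using e1(2)
  proof eventually_elim
    case (elim \<omega>)
    have "ennreal (exp (\<rho> * (real (Nh h \<omega>) * h))) \<le> (SUP k\<in>{0<..h0}. ennreal (exp (\<rho> * (real (Nh k \<omega>) * k))))"
      by (rule SUP_upper[OF hh])
    then have "enn2real (ennreal (exp (\<rho> * (real (Nh h \<omega>) * h)))) \<le> E \<omega>"
      unfolding E_def using elim by (intro enn2real_mono) auto
    then show ?case by (simp add: mult_ac)
  qed
  interpret ac: absctx M G "Nh h" "f h" "xi h" Lf h \<rho> Gf Gx E
  proof (intro absctx.intro P absctx_axioms.intro)
    show "subalgebra M (G n)" for n by (rule sub)
    show "Measurable.pred (G n) (\<lambda>\<omega>. n < Nh h \<omega>)" for n by (rule stopping_timeD2[OF stop])
    show "0 < Lf" by (rule Lf_pos)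
    show "0 < h" by (rule hp)
    show "Lf * h < 1/12" by (rule Lh)
    show "16 * Lf < \<rho>" using rho by simp
    show "\<bar>f h n \<omega> y - f h n \<omega> z\<bar> \<le> Lf * \<bar>y - z\<bar>" for n \<omega> y z by (rule F_lip[OF hh])
    show "A \<in> borel_measurable (G n) \<Longrightarrow> (\<lambda>\<omega>. f h n \<omega> (A \<omega>)) \<in> borel_measurable (G n)" for n A
      unfolding G_def by (rule F_adapt[OF hh])
    show "(\<lambda>\<omega>. indicator {\<omega>. n = Nh h \<omega>} \<omega> * xi h \<omega>) \<in> borel_measurable (G n)" for n by (rule xim)
    show "integrable M Gf" unfolding Gf_def by (rule f1(1))
    show "integrable M Gx" unfolding Gx_def by (rule x1(1))
    show "integrable M E" unfolding E_def by (rule e1(1))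
    show "0 \<le> Gf \<omega>" for \<omega> unfolding Gf_def by simp
    show "AE \<omega> in M. \<forall>n. n < Nh h \<omega> \<longrightarrow> (f h n \<omega> 0)^4 \<le> Gf \<omega>" by (rule bGf)
    show "AE \<omega> in M. (xi h \<omega>)^4 \<le> Gx \<omega>" by (rule bGx)
    show "AE \<omega> in M. exp ((\<rho> * h) * real (Nh h \<omega>)) \<le> E \<omega>" by (rule bE)
  qed
  show ?thesis using ac.main_abs unfolding G_def .
qed

end
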